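(* Under Total Store Order, in the limit $m\to\infty$, $\Pr[B_0]=2/3$, and for every integer $\gamma>0$, $$\Pr[B_\gamma]=\tfrac{6}{7}\cdot 4^{-\gamma}+R(\gamma)\cdot 2^{-\gamma}$$ for some number $R(\gamma)$ with $0\le R(\gamma)\le \tfrac{2}{21}$.
   Context: Fix $m\ge 1$. A random program is a sequence $x_1,\dots,x_{m+2}$ of memory operations, each with a type in $\{\mathrm{LD},\mathrm{ST}\}$: $x_1,\dots,x_m$ have i.i.d. types, each $\mathrm{ST}$ with probability $1/2$ and $\mathrm{LD}$ with probability $1/2$; $x_{m+1}$ (the critical load) has type $\mathrm{LD}$ and $x_{m+2}$ (the critical store) has type $\mathrm{ST}$. The initial order is $S_0=(x_1,\dots,x_{m+2})$. A memory model is specified by the set of ordered type pairs $(\tau_1,\tau_2)$ for which an instruction of type $\tau_2$ may be moved ahead of an immediately preceding instruction of type $\tau_1$: Sequential Consistency (SC) allows no pair; Total Store Order (TSO) allows only the pair $(\mathrm{ST},\mathrm{LD})$ (a load may move ahead of a preceding store); Weak Ordering (WO) allows all four pairs. The settling process runs rounds $r=1,\dots,m+2$. Before round $r$, the current order $S_{r-1}$ consists of $x_1,\dots,x_{r-1}$ in some order in positions $1,\dots,r-1$, followed by $x_r,\dots,x_{m+2}$ in positions $r,\dots,m+2$. In round $r$, instruction $x_r$ (starting at position $r$) repeatedly attempts to swap with the instruction immediately preceding it in the current order: the attempt fails automatically if the pair (type of the preceding instruction, type of $x_r$) is not allowed by the memory model, or if $x_r$ is the critical store and the preceding instruction is the critical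 load; otherwise the attempt succeeds independently with probability $1/2$. The round ends when an attempt fails or $x_r$ reaches position $1$; the resulting order is $S_r$. The final order is $S_{m+2}$. For $\gamma\ge 0$, $B_\gamma$ is the event that in $S_{m+2}$ exactly $\gamma$ instructions lie strictly between the critical load and the critical store. *)

theory Defs
  imports "HOL-Probability.Probability"
begin

datatype optype = LD | ST

text \<open>A memory model: the set of ordered type pairs (type of preceding instruction,
  type of moving instruction) for which the moving instruction may pass.\<close>
definition SC_model :: "(optype \<times> optype) set" where "SC_model = {}"
definition TSO_model :: "(optype \<times> optype) set" where "TSO_model = {(ST, LD)}"
definition WO_model :: "(optype \<times> optype) set" where "WO_model = UNIV"

text \<open>Instructions are numbered 0..m+1 (0-based: x_(i+1) is instruction i).
  tys !! i is the type of instruction i; the critical load is instruction m,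
  the critical store is instruction m+1.\<close>

definition fair_coin :: "bool pmf" where "fair_coin = bernoulli_pmf (1/2)"

fun rand_types :: "nat \<Rightarrow> optype list pmf" where
  "rand_types 0 = return_pmf []"
| "rand_types (Suc n) = bind_pmf fair_coin (\<lambda>b.
      map_pmf (\<lambda>l. (if b then ST else LD) # l) (rand_types n))"

text \<open>One round: instruction x moves backwards through the already-settled prefix.
  The prefix is stored REVERSED (head = instruction immediately preceding x);
  the result is the reversed new prefix including x.\<close>
fun sink :: "(optype \<times> optype) set \<Rightarrow> optype list \<Rightarrow> nat \<Rightarrow> nat \<Rightarrow> nat \<Rightarrow> nat list \<Rightarrow> nat list pmf" where
  "sink M tys cl cs x [] = return_pmf [x]"
| "sink M tys cl cs x (y # ys) =
     (if (tys ! y, tys ! x) \<in> M \<and> \<not> (x = cs \<and> y = cl)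
      then bind_pmf fair_coin (\<lambda>b. if b then map_pmf ((#) y) (sink M tys cl cs x ys)
                                   else return_pmf (x # y # ys))
      else return_pmf (x # y # ys))"

text \<open>State (reversed order of the first n instructions) after rounds 1..n.\<close>
fun rounds :: "(optype \<times> optype) set \<Rightarrow> optype list \<Rightarrow> nat \<Rightarrow> nat \<Rightarrow> nat \<Rightarrow> nat list pmf" where
  "rounds M tys cl cs 0 = return_pmf []"
| "rounds M tys cl cs (Suc n) = bind_pmf (rounds M tys cl cs n) (sink M tys cl cs n)"

definition final_order :: "(optype \<times> optype) set \<Rightarrow> nat \<Rightarrow> nat list pmf" where
  "final_order M m = bind_pmf (rand_types m) (\<lambda>bs.
      map_pmf rev (rounds M (bs @ [LD, ST]) m (Suc m) (m + 2)))"

definition pos :: "nat list \<Rightarrow> nat \<Rightarrow> nat" where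
  "pos xs a = length (takeWhile (\<lambda>z. z \<noteq> a) xs)"

definition gap :: "nat \<Rightarrow> nat list \<Rightarrow> nat" where
  "gap m xs = (let i = pos xs m; j = pos xs (Suc m) in max i j - min i j - 1)"

definition PrB :: "(optype \<times> optype) set \<Rightarrow> nat \<Rightarrow> nat \<Rightarrow> real" where
  "PrB M m \<gamma> = measure_pmf.prob (final_order M m) {xs. gap m xs = \<gamma>}"

end

theory Submission
  imports Defs
begin


fun D :: "nat \<Rightarrow> nat pmf" where
  "D 0 = return_pmf 0"
| "D (Suc t) = bind_pmf fair_coin (\<lambda>b. if b then map_pmf Suc (D t) else return_pmf 0)"

definition tr :: "optype list \<Rightarrow> nat list \<Rightarrow> nat" where
  "tr tys ys = length (takeWhile (\<lambda>y. tys ! y = ST) ys)"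

lemma sink_ST: "tys ! x = ST \<Longrightarrow> sink TSO_model tys cl cs x ys = return_pmf (x # ys)"
  by (cases ys) (auto simp: TSO_model_def)

lemma sink_LD_tr:
  assumes "tys ! x = LD" "x \<noteq> cs"
  shows "map_pmf (tr tys) (sink TSO_model tys cl cs x ys) = D (tr tys ys)"
proof (induction ys)
  case Nil
  then show ?case using assms by (simp add: tr_def)
next
  case (Cons y ys)
  show ?case
  proof (cases "tys ! y")
    case LD
    then show ?thesis using assms by (simp add: tr_def TSO_model_def)
  next
    case ST
    have e: "map_pmf (\<lambda>L. Suc (length (takeWhile (\<lambda>y. tys ! y = ST) L))) X = map_pmf Suc (map_pmf (\<lambda>L. length (takeWhile (\<lambda>y. tys ! y = ST) L)) X)" for X
      by (simp add: map_pmf_comp)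
    show ?thesis using ST assms Cons
      by (auto simp: tr_def TSO_model_def map_bind_pmf map_pmf_comp intro!: bind_pmf_cong)
         (simp_all add: tr_def e)
  qed
qed

lemma sink_LD_gap:
  assumes "tys ! x = LD" "x \<noteq> cs" "x \<notin> set ys"
  shows "map_pmf (\<lambda>L. length (takeWhile (\<lambda>z. z \<noteq> x) L)) (sink TSO_model tys cl cs x ys) = D (tr tys ys)"
  using assms(3)
proof (induction ys)
  case Nil
  then show ?case using assms by (simp add: tr_def)
next
  case (Cons y ys)
  show ?case
  proof (cases "tys ! y")
    case LD
    then show ?thesis using assms by (simp add: tr_def TSO_model_def)
  next
    case ST
    have e: "map_pmf (\<lambda>L. Suc (length (takeWhile (\<lambda>z. z \<noteq> x) L))) X = map_pmf Suc (map_pmf (\<lambda>L. length (takeWhile (\<lambda>z. z \<noteq> x) L)) X)" for X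
      by (simp add: map_pmf_comp)
    show ?thesis using ST assms Cons
      by (auto simp: tr_def TSO_model_def map_bind_pmf map_pmf_comp intro!: bind_pmf_cong)
         (simp_all add: tr_def e)
  qed
qed

lemma sink_mset: "L \<in> set_pmf (sink M tys cl cs x ys) \<Longrightarrow> mset L = add_mset x (mset ys)"
proof (induction ys arbitrary: L)
  case Nil
  then show ?case by simp
next
  case (Cons y ys)
  then show ?case by (auto simp: fair_coin_def split: if_splits)
qed

lemma rounds_mset: "L \<in> set_pmf (rounds M tys cl cs n) \<Longrightarrow> mset L = mset [0..<n]"
proof (induction n arbitrary: L)
  case 0
  then show ?case by simp
next
  case (Suc n)
  then show ?case by (auto dest!: sink_mset)
qed

lemma rand_types_length: "bs \<in> set_pmf (rand_types n) \<Longrightarrow> length bs = n"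
  by (induction n arbitrary: bs) (auto simp: fair_coin_def)

lemma rand_types_snoc:
  "rand_types (Suc n) = bind_pmf (rand_types n) (\<lambda>l. map_pmf (\<lambda>b. l @ [if b then ST else LD]) fair_coin)"
proof (induction n)
  case 0
  then show ?case by (simp add: map_pmf_def bind_return_pmf bind_return_pmf')
next
  case (Suc n)
  have "rand_types (Suc (Suc n)) = bind_pmf fair_coin (\<lambda>b.
      map_pmf (\<lambda>l. (if b then ST else LD) # l) (rand_types (Suc n)))" by simp
  also have "\<dots> = bind_pmf fair_coin (\<lambda>b. bind_pmf (rand_types n) (\<lambda>l. map_pmf (\<lambda>c. ((if b then ST else LD) # l) @ [if c then ST else LD]) fair_coin))"
    by (subst Suc) (simp add: map_bind_pmf map_pmf_comp)
  also have "\<dots> = bind_pmf fair_coin (\<lambda>b. bind_pmf fair_coin (\<lambda>c. map_pmf (\<lambda>l. ((if b then ST else LD) # l) @ [if c then ST else LD]) (rand_types n)))"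
    unfolding map_pmf_def by (subst bind_commute_pmf) (rule refl)
  also have "\<dots> = bind_pmf (rand_types (Suc n)) (\<lambda>l. map_pmf (\<lambda>c. l @ [if c then ST else LD]) fair_coin)"
    by (simp add: bind_map_pmf map_pmf_def bind_assoc_pmf bind_return_pmf)
       (rule bind_pmf_cong[OF refl], rule bind_commute_pmf[symmetric])
  finally show ?case .
qed

definition stepb :: "bool \<Rightarrow> nat \<Rightarrow> nat pmf" where
  "stepb b t = (if b then return_pmf (Suc t) else D t)"

fun chain :: "nat \<Rightarrow> nat pmf" where
  "chain 0 = return_pmf 0"
| "chain (Suc n) = bind_pmf (chain n) (\<lambda>t. bind_pmf fair_coin (\<lambda>b. stepb b t))"

lemma sink_step:
  assumes "x \<noteq> cs"
  shows "map_pmf (tr tys) (sink TSO_model tys cl cs x ys) = stepb (tys ! x = ST) (tr tys ys)"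
proof (cases "tys ! x")
  case LD
  then show ?thesis using sink_LD_tr[OF LD assms] by (simp add: stepb_def)
next
  case ST
  then show ?thesis by (simp add: sink_ST stepb_def tr_def)
qed

lemma Q_lemma:
  assumes "n \<le> cs"
  shows "bind_pmf (rand_types n) (\<lambda>bs. map_pmf (tr (bs @ sfx)) (rounds TSO_model (bs @ sfx) cl cs n)) = chain n"
  using assms
proof (induction n arbitrary: sfx)
  case 0
  then show ?case by (simp add: tr_def)
next
  case (Suc n)
  define ty where "ty = (\<lambda>b. if b then ST else LD)"
  have "bind_pmf (rand_types (Suc n)) (\<lambda>bs. map_pmf (tr (bs @ sfx)) (rounds TSO_model (bs @ sfx) cl cs (Suc n)))
    = bind_pmf (rand_types n) (\<lambda>l. bind_pmf fair_coin (\<lambda>b.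
        map_pmf (tr (l @ ty b # sfx)) (bind_pmf (rounds TSO_model (l @ ty b # sfx) cl cs n) (sink TSO_model (l @ ty b # sfx) cl cs n))))"
    unfolding rand_types_snoc by (simp add: bind_map_pmf bind_assoc_pmf ty_def)
  also have "\<dots> = bind_pmf (rand_types n) (\<lambda>l. bind_pmf fair_coin (\<lambda>b.
        bind_pmf (map_pmf (tr (l @ ty b # sfx)) (rounds TSO_model (l @ ty b # sfx) cl cs n)) (stepb b)))"
  proof (intro bind_pmf_cong refl)
    fix l b assume l: "l \<in> set_pmf (rand_types n)"
    have len: "length l = n" using rand_types_length[OF l] .
    have "(l @ ty b # sfx) ! n = ty b" using len by (simp add: nth_append)
    then have tb: "((l @ ty b # sfx) ! n = ST) = b" by (simp add: ty_def)
    show "map_pmf (tr (l @ ty b # sfx)) (bind_pmf (rounds TSO_model (l @ ty b # sfx) cl cs n) (sink TSO_model (l @ ty b # sfx) cl cs n))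
      = bind_pmf (map_pmf (tr (l @ ty b # sfx)) (rounds TSO_model (l @ ty b # sfx) cl cs n)) (stepb b)"
      using Suc.prems by (simp add: map_bind_pmf bind_map_pmf sink_step tb)
  qed
  also have "\<dots> = bind_pmf fair_coin (\<lambda>b. bind_pmf (rand_types n) (\<lambda>l.
        bind_pmf (map_pmf (tr (l @ ty b # sfx)) (rounds TSO_model (l @ ty b # sfx) cl cs n)) (stepb b)))"
    by (rule bind_commute_pmf)
  also have "\<dots> = bind_pmf fair_coin (\<lambda>b. bind_pmf (chain n) (stepb b))"
    using Suc by (simp add: bind_assoc_pmf[symmetric])
  also have "\<dots> = chain (Suc n)"
    by (simp add: bind_commute_pmf[of fair_coin])
  finally show ?case .
qed

lemma gap_rev:
  assumes "distinct L" "m \<in> set L" "Suc m \<notin> set L"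
  shows "gap m (rev (Suc m # L)) = length (takeWhile (\<lambda>z. z \<noteq> m) L)"
proof -
  obtain a b where L: "L = a @ m # b" and ma: "m \<notin> set a"
    using split_list_first[OF assms(2)] by blast
  have mb: "m \<notin> set b" using assms(1) L by auto
  have tw: "takeWhile (\<lambda>z. z \<noteq> m) L = a" using L ma by (subst L, subst takeWhile_append2) auto
  have p1: "pos (rev (Suc m # L)) m = length b"
    using mb L by (simp add: pos_def, subst takeWhile_append2) auto
  have p2: "pos (rev (Suc m # L)) (Suc m) = length L"
    using assms(3) by (simp add: pos_def, subst takeWhile_append2) auto
  show ?thesis unfolding gap_def Let_def p1 p2 tw using L by simp
qed

lemma final_gap: "map_pmf (gap m) (final_order TSO_model m) = bind_pmf (chain m) D"
proof -
  have m2: "m + 2 = Suc (Suc m)" by simp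
  have "map_pmf (gap m) (final_order TSO_model m) = bind_pmf (rand_types m) (\<lambda>bs.
      bind_pmf (map_pmf (tr (bs @ [LD, ST])) (rounds TSO_model (bs @ [LD, ST]) m (Suc m) m)) D)"
    unfolding final_order_def map_bind_pmf m2
  proof (intro bind_pmf_cong refl)
    fix bs assume bs: "bs \<in> set_pmf (rand_types m)"
    define tys where "tys = bs @ [LD, ST]"
    have len: "length bs = m" using rand_types_length[OF bs] .
    have tm: "tys ! m = LD" and tsm: "tys ! Suc m = ST" using len by (simp_all add: tys_def nth_append)
    show "map_pmf (gap m) (map_pmf rev (rounds TSO_model (bs @ [LD, ST]) m (Suc m) (Suc (Suc m)))) =
      bind_pmf (map_pmf (tr (bs @ [LD, ST])) (rounds TSO_model (bs @ [LD, ST]) m (Suc m) m)) D"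
      unfolding tys_def[symmetric]
      unfolding rounds.simps bind_map_pmf bind_assoc_pmf map_pmf_comp map_bind_pmf
    proof (intro bind_pmf_cong refl)
      fix ys assume ys: "ys \<in> set_pmf (rounds TSO_model tys m (Suc m) m)"
      have msys: "mset ys = mset [0..<m]" using rounds_mset[OF ys] .
      then have sys: "set ys = {..<m}" by (metis atLeast_upt set_mset_mset)
      have "bind_pmf (sink TSO_model tys m (Suc m) m ys) (\<lambda>x. map_pmf (\<lambda>x. gap m (rev x)) (sink TSO_model tys m (Suc m) (Suc m) x))
        = bind_pmf (sink TSO_model tys m (Suc m) m ys) (\<lambda>L. return_pmf (length (takeWhile (\<lambda>z. z \<noteq> m) L)))"
      proof (intro bind_pmf_cong refl)
        fix L assume L: "L \<in> set_pmf (sink TSO_model tys m (Suc m) m ys)"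
        have "mset L = add_mset m (mset [0..<m])" using sink_mset[OF L] msys by simp
        also have "\<dots> = mset [0..<Suc m]" by simp
        finally have mL: "mset L = mset [0..<Suc m]" .
        then have dL: "distinct L" by (metis distinct_upt mset_eq_imp_distinct_iff)
        have sL: "set L = {..<Suc m}" using mL by (metis atLeast_upt set_mset_mset)
        show "map_pmf (\<lambda>x. gap m (rev x)) (sink TSO_model tys m (Suc m) (Suc m) L) =
          return_pmf (length (takeWhile (\<lambda>z. z \<noteq> m) L))"
          using gap_rev[OF dL] sL by (simp add: sink_ST[OF tsm])
      qed
      also have "\<dots> = map_pmf (\<lambda>L. length (takeWhile (\<lambda>z. z \<noteq> m) L)) (sink TSO_model tys m (Suc m) m ys)"
        by (simp add: map_pmf_def)
      also have "\<dots> = D (tr tys ys)"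
        by (rule sink_LD_gap[OF tm]) (use sys in auto)
      finally show "bind_pmf (sink TSO_model tys m (Suc m) m ys) (\<lambda>x. map_pmf (\<lambda>x. gap m (rev x)) (sink TSO_model tys m (Suc m) (Suc m) x)) = D (tr tys ys)" .
    qed
  qed
  also have "\<dots> = bind_pmf (chain m) D"
    by (simp add: bind_assoc_pmf[symmetric] Q_lemma)
  finally show ?thesis .
qed



lemma prob_bind: "measure_pmf.prob (bind_pmf M f) A = (\<integral>x. measure_pmf.prob (f x) A \<partial>M)"
proof -
  have int: "integrable (measure_pmf M) (\<lambda>x. measure_pmf.prob (f x) A)"
    by (rule measure_pmf.integrable_const_bound[where B=1]) auto
  have "ennreal (measure_pmf.prob (bind_pmf M f) A) = emeasure (bind_pmf M f) A"
    by (simp add: measure_pmf.emeasure_eq_measure)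
  also have "\<dots> = (\<integral>\<^sup>+x. emeasure (f x) A \<partial>M)" by simp
  also have "\<dots> = (\<integral>\<^sup>+x. ennreal (measure_pmf.prob (f x) A) \<partial>M)"
    by (simp add: measure_pmf.emeasure_eq_measure)
  also have "\<dots> = ennreal (\<integral>x. measure_pmf.prob (f x) A \<partial>M)"
    by (rule nn_integral_eq_integral[OF int]) auto
  finally show ?thesis by (simp add: integral_nonneg_AE)
qed

lemma int_ind2: "(\<integral>t. a * indicator A t + b * indicator B t \<partial>measure_pmf M)
   = a * measure_pmf.prob M A + b * measure_pmf.prob M B"
proof -
  have i1: "integrable (measure_pmf M) (\<lambda>t. a * indicator A t)"
    by (rule measure_pmf.integrable_const_bound[where B="\<bar>a\<bar>"]) (auto simp: indicator_def)
  have i2: "integrable (measure_pmf M) (\<lambda>t. b * indicator B t)"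
    by (rule measure_pmf.integrable_const_bound[where B="\<bar>b\<bar>"]) (auto simp: indicator_def)
  have "(\<integral>t. a * indicator A t + b * indicator B t \<partial>measure_pmf M) =
     (\<integral>t. a * indicator A t \<partial>measure_pmf M) + (\<integral>t. b * indicator B t \<partial>measure_pmf M)"
    by (rule Bochner_Integration.integral_add[OF i1 i2])
  then show ?thesis by (simp add: measure_pmf.emeasure_eq_measure)
qed

lemma coin_prob: "measure_pmf.prob (bind_pmf fair_coin f) A = (measure_pmf.prob (f True) A + measure_pmf.prob (f False) A) / 2"
  by (simp add: prob_bind fair_coin_def)

lemma D_tail: "measure_pmf.prob (D t) {x. k \<le> x} = (if k \<le> t then (1/2)^k else 0)"
proof (induction t arbitrary: k)
  case 0
  then show ?case by (simp add: indicator_def)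
next
  case (Suc t)
  show ?case
  proof (cases k)
    case 0
    then show ?thesis by simp
  next
    case (Suc k')
    have e: "Suc -` {x. Suc k' \<le> x} = {x. k' \<le> x}" by auto
    show ?thesis using Suc.IH[of k'] unfolding Suc by (simp add: coin_prob e indicator_def)
  qed
qed

definition q :: "nat \<Rightarrow> nat \<Rightarrow> real" where
  "q n j = measure_pmf.prob (chain n) {t. j \<le> t}"

lemma q_0: "q n 0 = 1" by (simp add: q_def)
lemma q_init: "q 0 (Suc j) = 0" by (simp add: q_def)

lemma q_Suc: "q (Suc n) (Suc j) = q n j / 2 + (1/2)^(j+2) * q n (Suc j)"
proof -
  have "q (Suc n) (Suc j) = (\<integral>t. measure_pmf.prob (bind_pmf fair_coin (\<lambda>b. stepb b t)) {x. Suc j \<le> x} \<partial>chain n)"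
    by (simp add: q_def prob_bind)
  also have "\<dots> = (\<integral>t. (1/2) * indicator {t. j \<le> t} t + (1/2)^(j+2) * indicator {t. Suc j \<le> t} t \<partial>chain n)"
    by (intro Bochner_Integration.integral_cong refl) (simp add: coin_prob stepb_def D_tail indicator_def)
  also have "\<dots> = q n j / 2 + (1/2)^(j+2) * q n (Suc j)"
    by (subst int_ind2) (simp add: q_def)
  finally show ?thesis .
qed

lemma pmf_final: "pmf (bind_pmf (chain m) D) g = (1/2)^g * q m g - (1/2)^(Suc g) * q m (Suc g)"
proof -
  have tail: "measure_pmf.prob (bind_pmf (chain m) D) {x. k \<le> x} = (1/2)^k * q m k" for k
  proof -
    have "measure_pmf.prob (bind_pmf (chain m) D) {x. k \<le> x} = (\<integral>t. (1/2)^k * indicator {t. k \<le> t} t + 0 * indicator {} t \<partial>chain m)"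
      by (simp only: prob_bind D_tail) (intro Bochner_Integration.integral_cong refl, simp add: indicator_def)
    also have "\<dots> = (1/2)^k * q m k" by (subst int_ind2) (simp add: q_def)
    finally show ?thesis .
  qed
  have "{g} = {x. g \<le> x} - {x. Suc g \<le> x}" by auto
  then have "pmf (bind_pmf (chain m) D) g = measure_pmf.prob (bind_pmf (chain m) D) ({x. g \<le> x} - {x. Suc g \<le> x})"
    by (simp add: measure_pmf_single[symmetric])
  also have "\<dots> = measure_pmf.prob (bind_pmf (chain m) D) {x. g \<le> x} - measure_pmf.prob (bind_pmf (chain m) D) {x. Suc g \<le> x}"
    by (rule measure_pmf.finite_measure_Diff) auto
  finally show ?thesis by (simp add: tail)
qed

lemma PrB_eq: "PrB TSO_model m g = (1/2)^g * q m g - (1/2)^(Suc g) * q m (Suc g)"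
proof -
  have "PrB TSO_model m g = measure_pmf.prob (map_pmf (gap m) (final_order TSO_model m)) {g}"
    by (simp add: PrB_def vimage_def)
  also have "\<dots> = pmf (bind_pmf (chain m) D) g" by (simp add: final_gap measure_pmf_single)
  finally show ?thesis by (simp add: pmf_final)
qed



lemma contr0:
  fixes E d :: "nat \<Rightarrow> real"
  assumes a: "0 \<le> a" "a < 1" and d: "d \<longlonglongrightarrow> 0" and E0: "\<And>n. 0 \<le> E n"
    and rec: "\<And>n. E (Suc n) \<le> a * E n + d n"
  shows "E \<longlonglongrightarrow> 0"
proof (rule LIMSEQ_I)
  fix r :: real assume r: "0 < r"
  define \<delta> where "\<delta> = r * (1 - a) / 2"
  have \<delta>: "0 < \<delta>" using r a by (simp add: \<delta>_def)
  obtain N where N: "\<And>n. n \<ge> N \<Longrightarrow> norm (d n) < \<delta>" using LIMSEQ_D[OF d \<delta>] by auto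
  have bound: "E (N + k) \<le> a ^ k * E N + r / 2" for k
  proof (induction k)
    case 0
    then show ?case using r by simp
  next
    case (Suc k)
    have "E (N + Suc k) \<le> a * E (N + k) + d (N + k)" using rec[of "N + k"] by simp
    also have "\<dots> \<le> a * (a ^ k * E N + r / 2) + \<delta>"
      using N[of "N + k"] Suc.IH a by (intro add_mono mult_left_mono) auto
    also have "\<dots> = a ^ Suc k * E N + r / 2" by (simp add: \<delta>_def field_simps)
    finally show ?case .
  qed
  have "(\<lambda>k. a ^ k * E N) \<longlonglongrightarrow> 0 * E N"
    by (intro tendsto_mult tendsto_const LIMSEQ_power_zero) (use a in auto)
  then obtain K where K: "\<And>k. k \<ge> K \<Longrightarrow> norm (a ^ k * E N) < r / 2"
    using LIMSEQ_D[of _ 0 "r/2"] r by fastforce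
  show "\<exists>no. \<forall>n\<ge>no. norm (E n - 0) < r"
  proof (intro exI allI impI)
    fix n assume n: "n \<ge> N + K"
    define k where "k = n - N"
    have k: "n = N + k" "k \<ge> K" using n by (simp_all add: k_def)
    have "E n \<le> a ^ k * E N + r / 2" using bound k by simp
    also have "\<dots> < r" using K[OF k(2)] by simp
    finally show "norm (E n - 0) < r" using E0[of n] by simp
  qed
qed

lemma contr:
  fixes x b :: "nat \<Rightarrow> real"
  assumes a: "0 \<le> a" "a < 1" and b: "b \<longlonglongrightarrow> bl"
    and rec: "\<And>n. x (Suc n) = a * x n + b n"
  shows "x \<longlonglongrightarrow> bl / (1 - a)"
proof -
  define l where "l = bl / (1 - a)"
  have l: "l = a * l + bl" using a by (simp add: l_def field_simps)
  have d: "(\<lambda>n. \<bar>b n - bl\<bar>) \<longlonglongrightarrow> 0"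
    using b by (simp add: tendsto_rabs_zero LIM_zero)
  have "(\<lambda>n. \<bar>x n - l\<bar>) \<longlonglongrightarrow> 0"
  proof (rule contr0[OF a d])
    fix n
    have "\<bar>x (Suc n) - l\<bar> = \<bar>a * (x n - l) + (b n - bl)\<bar>" by (subst rec, subst l) (simp add: algebra_simps)
    also have "\<dots> \<le> \<bar>a * (x n - l)\<bar> + \<bar>b n - bl\<bar>" by (rule abs_triangle_ineq)
    also have "\<dots> = a * \<bar>x n - l\<bar> + \<bar>b n - bl\<bar>" using a by (simp add: abs_mult)
    finally show "\<bar>x (Suc n) - l\<bar> \<le> a * \<bar>x n - l\<bar> + \<bar>b n - bl\<bar>" .
  qed auto
  then have "(\<lambda>n. x n - l) \<longlonglongrightarrow> 0" by (simp add: tendsto_rabs_zero_iff)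
  then show ?thesis unfolding l_def[symmetric] by (simp add: LIM_zero_iff)
qed

fun Lq :: "nat \<Rightarrow> real" where
  "Lq 0 = 1"
| "Lq (Suc j) = Lq j / (2 - (1/2)^(Suc j))"

lemma q_lim: "(\<lambda>n. q n j) \<longlonglongrightarrow> Lq j"
proof (induction j)
  case 0
  then show ?case by (simp add: q_0)
next
  case (Suc j)
  have h1: "(1/2::real)^j \<le> 1" by (rule power_le_one) auto
  have a: "(0::real) \<le> (1/2)^(j+2)" "(1/2::real)^(j+2) < 1"
    using h1 by simp_all
  have b: "(\<lambda>n. q n j / 2) \<longlonglongrightarrow> Lq j / 2" by (intro tendsto_divide Suc tendsto_const) auto
  have "(\<lambda>n. q n (Suc j)) \<longlonglongrightarrow> (Lq j / 2) / (1 - (1/2)^(j+2))"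
    by (rule contr[OF a b]) (simp add: q_Suc)
  moreover have "(Lq j / 2) / (1 - (1/2)^(j+2)) = Lq (Suc j)"
  proof -
    have p: "(1/2::real)^(j+2) = (1/2)^(Suc j) / 2" by simp
    have pos: "(1/2::real)^(Suc j) \<le> 1/2" by (simp add: power_le_one)
    show ?thesis using pos unfolding p by (simp add: field_simps)
  qed
  ultimately show ?case by simp
qed



fun P :: "nat \<Rightarrow> real" where
  "P 0 = 1"
| "P (Suc j) = P j / (1 - (1/2)^(j+2))"

lemma half_pow_le: "(1/2::real)^(Suc j) \<le> 1/2"
  using power_le_one[of "1/2::real" j] by simp

lemma P_pos: "P j > 0"
proof (induction j)
  case (Suc j)
  have "(1/2::real)^(j+2) < 1" using half_pow_le[of j] by simp
  then show ?case using Suc by simp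
qed simp

lemma P_mono: "P j \<le> P (Suc j)"
proof -
  have h: "(1/2::real)^(j+2) < 1" "0 < (1/2::real)^(j+2)" using half_pow_le[of j] by simp_all
  have "P j * 1 \<le> P j * (1 / (1 - (1/2)^(j+2)))"
    using P_pos[of j] h by (intro mult_left_mono) (auto simp: field_simps)
  then show ?thesis by simp
qed

lemma P_ge: "j \<ge> 1 \<Longrightarrow> P j \<ge> 4/3"
proof (induction j)
  case (Suc j)
  show ?case
  proof (cases "j = 0")
    case True then show ?thesis by simp
  next
    case False
    then have "4/3 \<le> P j" using Suc.IH by simp
    then show ?thesis using P_mono[of j] by linarith
  qed
qed simp

lemma P_bound: "P j * (1/2 + (1/2)^(Suc j)) \<le> 1"
proof (induction j)
  case 0
  then show ?case by simp
next
  case (Suc j)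
  define y :: real where "y = (1/2)^(Suc j)"
  have y: "0 < y" "y \<le> 1/2" using half_pow_le[of j] by (simp_all add: y_def)
  have e1: "(1/2::real)^(j+2) = y / 2" "(1/2::real)^(Suc (Suc j)) = y / 2" by (simp_all add: y_def)
  have IH: "P j * (1/2 + y) \<le> 1" using Suc by (simp add: y_def)
  have d: "0 < 1 - y/2" using y by simp
  have key: "(1/2 + y/2) \<le> (1/2 + y) * (1 - y/2)" using y by (simp add: algebra_simps)
  have "P (Suc j) * (1/2 + (1/2)^(Suc (Suc j))) = P j * (1/2 + y/2) / (1 - y/2)"
    using d by (simp only: P.simps e1) (simp add: field_simps)
  also have "\<dots> \<le> P j * ((1/2 + y) * (1 - y/2)) / (1 - y/2)"
    using P_pos[of j] key d by (intro divide_right_mono mult_left_mono) auto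
  also have "\<dots> = P j * (1/2 + y)" using d by simp
  also have "\<dots> \<le> 1" by (rule IH)
  finally show ?case .
qed

lemma P_le2: "P j \<le> 2"
proof -
  have "P j * (1/2) \<le> P j * (1/2 + (1/2)^(Suc j))" using P_pos[of j] by (intro mult_left_mono) auto
  also have "\<dots> \<le> 1" by (rule P_bound)
  finally show ?thesis by simp
qed

lemma Lq_P: "Lq j = (1/2)^j * P j"
proof (induction j)
  case (Suc j)
  have h: "(1/2::real)^(Suc j) \<le> 1/2" by (rule half_pow_le)
  have h2: "(1/2::real)^(j+2) < 1" using h by simp
  show ?case using Suc h h2 by (simp add: field_simps)
qed simp



lemma alg: "0 < (x::real) \<Longrightarrow> x \<le> 1 \<Longrightarrow> x * p - (x / 2 * (p / (1 - x / 4))) / 2 - 6/7 * x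
   = x * (p * ((3 - x) / (4 - x)) - 6/7)"
  by (simp add: field_simps)

lemma R_formula: "Lq g - Lq (Suc g) / 2 - 6/7 * (1/2)^g
   = (1/2)^g * (P g * ((3 - (1/2)^g) / (4 - (1/2)^g)) - 6/7)"
proof -
  define x :: real where "x = (1/2)^g"
  have x: "0 < x" "x \<le> 1" by (simp_all add: x_def power_le_one)
  have l1: "Lq g = x * P g" by (simp add: Lq_P x_def)
  have "(1/2::real)^(g+2) = x / 4" "(1/2::real)^(Suc g) = x / 2" by (simp_all add: x_def)
  then have l2: "Lq (Suc g) = x / 2 * (P g / (1 - x / 4))" by (simp only: Lq_P P.simps)
  show ?thesis unfolding l1 l2 x_def[symmetric] by (rule alg[OF x])
qed

lemma R_bounds:
  assumes "g \<ge> 1"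
  shows "0 \<le> Lq g - Lq (Suc g) / 2 - 6/7 * (1/2)^g \<and> Lq g - Lq (Suc g) / 2 - 6/7 * (1/2)^g \<le> 2/21"
proof -
  define x :: real where "x = (1/2)^g"
  define p where "p = P g"
  define B where "B = p * ((3 - x) / (4 - x)) - 6/7"
  have R: "Lq g - Lq (Suc g) / 2 - 6/7 * (1/2)^g = x * B"
    unfolding R_formula x_def p_def B_def ..
  have x0: "0 < x" by (simp add: x_def)
  have x1: "x \<le> 1/2" using half_pow_le[of "g - 1"] assms by (simp add: x_def)
  have p1: "4/3 \<le> p" "p \<le> 2" using P_ge[OF assms] P_le2 by (simp_all add: p_def)
  have f0: "0 \<le> (3 - x) / (4 - x)" using x1 by simp
  have f1: "5/7 \<le> (3 - x) / (4 - x)" using x1 by (simp add: field_simps)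
  have f2: "(3 - x) / (4 - x) \<le> 3/4" using x0 x1 by (simp add: field_simps)
  have "4/3 * (5/7) \<le> p * ((3 - x) / (4 - x))" using p1 f1 by (intro mult_mono) auto
  then have B0: "0 \<le> B" unfolding B_def by linarith
  have "p * ((3 - x) / (4 - x)) \<le> 2 * (3/4)" using p1 f0 f2 by (intro mult_mono) auto
  then have B1: "B \<le> 9/14" unfolding B_def by linarith
  have up: "x * B \<le> 2/21"
  proof (cases "g \<ge> 3")
    case True
    have "x \<le> (1/2)^3" unfolding x_def by (rule power_decreasing) (use True in auto)
    then have "x \<le> 1/8" by (simp add: power3_eq_cube)
    then have "x * B \<le> 1/8 * (9/14)" using B0 B1 x0 by (intro mult_mono) auto
    then show ?thesis by simp
  next
    case False
    then have "g = 1 \<or> g = 2" using assms by auto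
    then show ?thesis
    proof
      assume g: "g = 1"
      then show ?thesis by (simp add: x_def B_def p_def numeral_2_eq_2)
    next
      assume g: "g = 2"
      then show ?thesis by (simp add: x_def B_def p_def numeral_2_eq_2)
    qed
  qed
  show ?thesis unfolding R using up B0 x0 by simp
qed

lemma lim_PrB: "(\<lambda>m. PrB TSO_model m g) \<longlonglongrightarrow> (1/2)^g * Lq g - (1/2)^(Suc g) * Lq (Suc g)"
  unfolding PrB_eq by (intro tendsto_intros q_lim)

theorem theorem1:
  shows "(\<lambda>m. PrB TSO_model m 0) \<longlonglongrightarrow> 2/3
    \<and> (\<forall>\<gamma>::nat. \<gamma> > 0 \<longrightarrow> (\<exists>R::real. 0 \<le> R \<and> R \<le> 2/21 \<and>
         (\<lambda>m. PrB TSO_model m \<gamma>) \<longlonglongrightarrow> 6/7 * (1/4)^\<gamma> + R * (1/2)^\<gamma>))"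
proof (intro conjI allI impI)
  show "(\<lambda>m. PrB TSO_model m 0) \<longlonglongrightarrow> 2/3"
    using lim_PrB[of 0] by simp
next
  fix g :: nat assume g: "g > 0"
  define R where "R = Lq g - Lq (Suc g) / 2 - 6/7 * (1/2)^g"
  have e: "6/7 * (1/4)^g + R * (1/2)^g = (1/2)^g * Lq g - (1/2)^(Suc g) * Lq (Suc g)"
  proof -
    have "(1/4::real)^g = (1/2)^g * (1/2)^g" by (simp add: power_mult_distrib[symmetric])
    then show ?thesis by (simp add: R_def algebra_simps)
  qed
  have lim: "(\<lambda>m. PrB TSO_model m g) \<longlonglongrightarrow> 6/7 * (1/4)^g + R * (1/2)^g"
    using lim_PrB[of g] unfolding e .
  have "0 \<le> R \<and> R \<le> 2/21" using R_bounds[of g] g unfolding R_def by auto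
  then show "\<exists>R::real. 0 \<le> R \<and> R \<le> 2/21 \<and>
         (\<lambda>m. PrB TSO_model m g) \<longlonglongrightarrow> 6/7 * (1/4)^g + R * (1/2)^g"
    using lim by blast
qed


end
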